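(* For every positive integer $B$, every max-min $B$-bounded space algorithm $ALG$ for the classic bin packing problem, and every positive integer $m$ with $m\ge 2B$ and $m$ divisible by $3$, there exists a sorted item sequence $I$ such that $OPT(I)=m$ and $ALG(I)\ge\frac{7}{6}\cdot OPT(I)-B$.
   Context: Classic bin packing: an item sequence $I=(a_1,\dots,a_n)\in(0,1]^n$ must be packed into bins of capacity $1$; $OPT(I)$ is the minimum number of non-empty bins, $ALG(I)$ the number of non-empty bins used by algorithm $ALG$. $I$ is sorted if $a_1\ge\cdots\ge a_n$. A max-min algorithm first sorts the input in non-increasing order and then repeatedly takes either the head (largest) or the tail (smallest) item of the currently remaining sorted sequence and packs it into a bin, each decision depending only on the items already packed and the current head and tail items, without seeing other remaining items. A bin is open if it contains an item and the algorithm may still pack items into it; closed bins never receive further items. A $B$-bounded space algorithm keeps at most $B$ open bins at any time. *)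

theory Defs
  imports Main "HOL.Real"
begin

definition valid_items :: "real list \<Rightarrow> bool" where
  "valid_items I \<longleftrightarrow> (\<forall>x\<in>set I. 0 < x \<and> x \<le> 1)"

definition sorted_input :: "real list \<Rightarrow> bool" where
  "sorted_input I \<longleftrightarrow> sorted_wrt (\<ge>) I"

definition opt :: "real list \<Rightarrow> nat" where
  "opt I = (LEAST k. \<exists>f::nat \<Rightarrow> nat. (\<forall>i<length I. f i < k) \<and>
      (\<forall>j. (\<Sum>i | i < length I \<and> f i = j. I ! i) \<le> 1))"

text \<open>A packing step: (took the head?, item size, bin index, set of bins closed
  at this step). The history is the list of steps performed so far.\<close>
type_synonym step = "bool \<times> real \<times> nat \<times> nat set"
type_synonym history = "step list"

text \<open>A max-min algorithm: given the history (items already packed, where, and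
  which bins were closed) and the current head (largest) and tail (smallest)
  remaining items, it decides whether to take the head (True) or the tail (False),
  the bin to put it into, and the set of bins to close.\<close>
type_synonym maxmin_alg = "history \<Rightarrow> real \<Rightarrow> real \<Rightarrow> bool \<times> nat \<times> nat set"

definition step_item :: "step \<Rightarrow> real" where "step_item s = fst (snd s)"
definition step_bin :: "step \<Rightarrow> nat" where "step_bin s = fst (snd (snd s))"
definition step_close :: "step \<Rightarrow> nat set" where "step_close s = snd (snd (snd s))"

definition used_bins :: "history \<Rightarrow> nat set" where
  "used_bins h = step_bin ` set h"

definition closed_bins :: "history \<Rightarrow> nat set" where
  "closed_bins h = (\<Union>s\<in>set h. step_close s)"

definition open_bins :: "history \<Rightarrow> nat set" where
  "open_bins h = used_bins h - closed_bins h"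

definition bin_load :: "history \<Rightarrow> nat \<Rightarrow> real" where
  "bin_load h b = sum_list (map step_item (filter (\<lambda>s. step_bin s = b) h))"

function run :: "maxmin_alg \<Rightarrow> history \<Rightarrow> real list \<Rightarrow> history" where
  "run A h xs =
     (if xs = [] then h
      else (case A h (hd xs) (last xs) of (t, b, C) \<Rightarrow>
              let x = (if t then hd xs else last xs);
                  rest = (if t then tl xs else butlast xs)
              in run A (h @ [(t, x, b, C)]) rest))"
  by pat_completeness auto
termination
  by (relation "measure (\<lambda>(A, h, xs). length xs)") (auto simp: length_butlast)

definition ALG :: "maxmin_alg \<Rightarrow> real list \<Rightarrow> nat" where
  "ALG A I = card (used_bins (run A [] I))"

definition legal_step :: "nat \<Rightarrow> history \<Rightarrow> step \<Rightarrow> bool" where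
  "legal_step B h s \<longleftrightarrow> step_bin s \<notin> closed_bins h \<and>
     bin_load h (step_bin s) + step_item s \<le> 1 \<and>
     card (open_bins (h @ [s])) \<le> B"

definition legal_run :: "nat \<Rightarrow> history \<Rightarrow> bool" where
  "legal_run B h \<longleftrightarrow> (\<forall>i<length h. legal_step B (take i h) (h ! i))"

definition maxmin_bounded :: "nat \<Rightarrow> maxmin_alg \<Rightarrow> bool" where
  "maxmin_bounded B A \<longleftrightarrow>
     (\<forall>I. sorted_input I \<and> valid_items I \<longrightarrow> legal_run B (run A [] I))"

end

theory Submission
  imports Defs "HOL-Library.Multiset"
begin


lemma butlast_rep: "butlast (replicate (Suc n) y) = replicate n y"
  by (induction n) auto


lemma run_nil: "run A h [] = h" by (subst run.simps) simp

declare run.simps[simp del]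

lemma run_unfold: "xs \<noteq> [] \<Longrightarrow> run A h xs = run A (h @ [(fst (A h (hd xs) (last xs)),
   if fst (A h (hd xs) (last xs)) then hd xs else last xs, fst (snd (A h (hd xs) (last xs))),
   snd (snd (A h (hd xs) (last xs))))]) (if fst (A h (hd xs) (last xs)) then tl xs else butlast xs)"
  by (subst run.simps) (auto split: prod.split simp: Let_def)

lemma run_ext: "\<exists>q. run A h xs = h @ q \<and> mset (map step_item q) = mset xs"
proof (induction "length xs" arbitrary: h xs rule: less_induct)
  case less
  show ?case
  proof (cases "xs = []")
    case True then show ?thesis by (simp add: run_nil)
  next
    case False
    define t where "t = fst (A h (hd xs) (last xs))"
    define s where "s = (t, if t then hd xs else last xs, fst (snd (A h (hd xs) (last xs))),
   snd (snd (A h (hd xs) (last xs))))"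
    define r where "r = (if t then tl xs else butlast xs)"
    have eq: "run A h xs = run A (h @ [s]) r" using run_unfold[OF False, of A h]
      unfolding s_def r_def t_def by simp
    have "length r < length xs" using False by (auto simp: r_def)
    then obtain q where q: "run A (h @ [s]) r = (h @ [s]) @ q" "mset (map step_item q) = mset r"
      using less by blast
    have "mset xs = add_mset (step_item s) (mset r)"
    proof (cases t)
      case True
      have "mset xs = add_mset (hd xs) (mset (tl xs))" using False by (cases xs) auto
      then show ?thesis using True by (simp add: s_def r_def step_item_def)
    next
      case f: False
      obtain ys z where "xs = ys @ [z]" using False by (metis rev_exhaust)
      then have "mset xs = add_mset (last xs) (mset (butlast xs))" by simp
      then show ?thesis using f by (simp add: s_def r_def step_item_def)
    qed
    then show ?thesis using eq q by (intro exI[of _ "s # q"]) simp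
  qed
qed

fun histo :: "maxmin_alg \<Rightarrow> real \<Rightarrow> real \<Rightarrow> nat \<Rightarrow> history" where
  "histo A x y 0 = []"
| "histo A x y (Suc k) = histo A x y k @ [(fst (A (histo A x y k) x y),
     if fst (A (histo A x y k) x y) then x else y, fst (snd (A (histo A x y k) x y)),
     snd (snd (A (histo A x y k) x y)))]"

definition nh where "nh A x y k = length (filter fst (histo A x y k))"
definition nt where "nt A x y k = length (filter (\<lambda>s. \<not> fst s) (histo A x y k))"

lemma histo_len[simp]: "length (histo A x y k) = k" by (induction k) auto

lemma nh_nt: "nh A x y k + nt A x y k = k"
  unfolding nh_def nt_def using sum_length_filter_compl[of fst "histo A x y k"] by simp

lemma nh_Suc: "nh A x y (Suc k) = nh A x y k + (if fst (A (histo A x y k) x y) then 1 else 0)"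
  by (simp add: nh_def)
lemma nt_Suc: "nt A x y (Suc k) = nt A x y k + (if fst (A (histo A x y k) x y) then 0 else 1)"
  by (simp add: nt_def)

lemma histo_items: "s \<in> set (histo A x y k) \<Longrightarrow> step_item s \<in> {x, y}"
  by (induction k) (auto simp: step_item_def)

lemma histo_count: "x \<noteq> y \<Longrightarrow> length (filter (\<lambda>s. step_item s = x) (histo A x y k)) = nh A x y k"
  by (induction k) (auto simp: nh_def step_item_def)

lemma agree:
  assumes "\<forall>k'<k. nh A x y k' < a \<and> nt A x y k' < c"
  shows "run A [] (replicate a x @ mid @ replicate c y) =
    run A (histo A x y k) (replicate (a - nh A x y k) x @ mid @ replicate (c - nt A x y k) y)"
  using assms
proof (induction k)
  case 0 then show ?case by (simp add: nh_def nt_def)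
next
  case (Suc k)
  have IH: "run A [] (replicate a x @ mid @ replicate c y) =
    run A (histo A x y k) (replicate (a - nh A x y k) x @ mid @ replicate (c - nt A x y k) y)"
    using Suc by auto
  have lt: "nh A x y k < a" "nt A x y k < c" using Suc.prems by auto
  then obtain a' c' where a': "a - nh A x y k = Suc a'" and c': "c - nt A x y k = Suc c'"
    by (metis Suc_diff_Suc)
  define xs where "xs = replicate (a - nh A x y k) x @ mid @ replicate (c - nt A x y k) y"
  have ne: "xs \<noteq> []" "hd xs = x" "last xs = y" using a' c' by (auto simp: xs_def)
  have tl: "tl xs = replicate a' x @ mid @ replicate (Suc c') y" using a' c' by (simp add: xs_def)
  have bl: "butlast xs = replicate (Suc a') x @ mid @ replicate c' y"
    using a' c' by (simp add: xs_def butlast_append butlast_rep del: replicate_Suc)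
  have a'': "a - Suc (nh A x y k) = a'" using a' by simp
  have c'': "c - Suc (nt A x y k) = c'" using c' by simp
  have ru: "run A (histo A x y k) xs = run A (histo A x y (Suc k))
      (if fst (A (histo A x y k) x y) then tl xs else butlast xs)"
    using run_unfold[OF ne(1), of A "histo A x y k"] ne by simp
  show ?case
  proof (cases "fst (A (histo A x y k) x y)")
    case True
    then show ?thesis using IH ru tl a' c' unfolding xs_def[symmetric]
      by (simp add: nh_Suc nt_Suc a'' c'')
  next
    case False
    then show ?thesis using IH ru bl a' c' unfolding xs_def[symmetric]
      by (simp add: nh_Suc nt_Suc a'' c'')
  qed
qed



lemma bin_load_snoc: "bin_load (h @ [s]) b = bin_load h b + (if step_bin s = b then step_item s else 0)"
  by (simp add: bin_load_def)

lemma load_le1: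
  assumes "legal_run B H"
  shows "bin_load H b \<le> 1"
proof -
  have "\<forall>b. bin_load (take k H) b \<le> 1" if "k \<le> length H" for k
    using that
  proof (induction k)
    case 0 then show ?case by (simp add: bin_load_def)
  next
    case (Suc k)
    then have k: "k < length H" by simp
    have leg: "legal_step B (take k H) (H!k)" using assms k by (simp add: legal_run_def)
    show ?case
    proof
      fix b
      show "bin_load (take (Suc k) H) b \<le> 1"
        using Suc k leg unfolding take_Suc_conv_app_nth[OF k] bin_load_snoc
        by (auto simp: legal_step_def)
    qed
  qed
  then show ?thesis by (metis order_refl take_all)
qed

lemma sl: "sum_list (map f (filter P xs)) = (\<Sum>i<length xs. if P (xs!i) then f (xs!i) else 0)"
proof (induction xs rule: rev_induct)
  case Nil then show ?case by simp
next
  case (snoc x xs)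
  have "(\<Sum>i<length (xs @ [x]). if P ((xs @ [x])!i) then f ((xs @ [x])!i) else 0)
     = (\<Sum>i<length xs. if P ((xs @ [x])!i) then f ((xs @ [x])!i) else 0) + (if P x then f x else 0)"
    by simp
  also have "(\<Sum>i<length xs. if P ((xs @ [x])!i) then f ((xs @ [x])!i) else 0)
     = (\<Sum>i<length xs. if P (xs!i) then f (xs!i) else 0)"
    by (rule sum.cong) (simp_all add: nth_append)
  finally show ?case using snoc by simp
qed

lemma bin_load_idx: "bin_load H b = (\<Sum>i\<in>{i. i < length H \<and> step_bin (H!i) = b}. step_item (H!i))"
proof -
  have "bin_load H b = (\<Sum>i<length H. if step_bin (H!i) = b then step_item (H!i) else 0)"
    by (simp add: bin_load_def sl)
  also have "\<dots> = (\<Sum>i\<in>{i\<in>{..<length H}. step_bin (H!i) = b}. step_item (H!i))"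
    by (rule sum.inter_filter[symmetric]) simp
  also have "{i\<in>{..<length H}. step_bin (H!i) = b} = {i. i < length H \<and> step_bin (H!i) = b}"
    by auto
  finally show ?thesis .
qed

lemma purity:
  assumes "legal_run B H" "b \<notin> open_bins (take p H)" "i < p" "p \<le> j" "j < length H"
    "step_bin (H!i) = b" "step_bin (H!j) = b"
  shows False
proof -
  have "H!i \<in> set (take p H)" using assms by (simp add: in_set_conv_nth) (metis nth_take assms(3) assms(4) assms(5) le_less_trans length_take min.absorb4 less_imp_le_nat)
  then have "b \<in> used_bins (take p H)" using assms by (auto simp: used_bins_def)
  then have "b \<in> closed_bins (take p H)" using assms by (simp add: open_bins_def)
  moreover have "set (take p H) \<subseteq> set (take j H)" using assms by (metis set_take_subset_set_take)
  ultimately have "b \<in> closed_bins (take j H)" by (auto simp: closed_bins_def)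
  moreover have "legal_step B (take j H) (H!j)" using assms by (simp add: legal_run_def)
  ultimately show False using assms by (simp add: legal_step_def)
qed

lemma open_card:
  assumes "legal_run B H" "0 < p" "p \<le> length H"
  shows "card (open_bins (take p H)) \<le> B"
proof -
  have k: "p - 1 < length H" using assms by simp
  have "legal_step B (take (p-1) H) (H!(p-1))" using assms k by (simp add: legal_run_def)
  moreover have "take (p-1) H @ [H!(p-1)] = take p H" using take_Suc_conv_app_nth[OF k] assms by simp
  ultimately show ?thesis by (simp add: legal_step_def)
qed

lemma open_fin: "finite (open_bins h)"
  by (simp add: open_bins_def used_bins_def)

lemma count_bins:
  fixes H :: history and wt :: "nat \<Rightarrow> nat"
  assumes "\<And>b. (\<Sum>i\<in>{i. i < length H \<and> step_bin (H!i) = b}. wt i) \<le> 12"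
    "\<And>b. b \<notin> S \<Longrightarrow> (\<Sum>i\<in>{i. i < length H \<and> step_bin (H!i) = b}. wt i) \<le> 6"
    "finite S"
  shows "(\<Sum>i<length H. wt i) \<le> 6 * card (used_bins H) + 6 * card S"
proof -
  define U where "U = used_bins H"
  have U: "U = (\<lambda>i. step_bin (H!i)) ` {..<length H}"
  proof -
    have "set H = (!) H ` {..<length H}" by (metis atLeast_upt image_set map_nth)
    then show ?thesis by (simp add: U_def used_bins_def image_image)
  qed
  have fU: "finite U" by (simp add: U)
  have "(\<Sum>i<length H. wt i) = (\<Sum>b\<in>U. \<Sum>i\<in>{x \<in> {..<length H}. step_bin (H!x) = b}. wt i)"
    using sum.group[of "{..<length H}" U "\<lambda>i. step_bin (H!i)" wt] fU U by simp
  also have "\<dots> \<le> (\<Sum>b\<in>U. 6 + (if b \<in> S then 6 else 0))"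
  proof (rule sum_mono)
    fix b assume "b \<in> U"
    show "(\<Sum>i\<in>{x \<in> {..<length H}. step_bin (H!x) = b}. wt i) \<le> 6 + (if b \<in> S then 6 else 0)"
      using assms(1)[of b] assms(2)[of b] by auto
  qed
  also have "\<dots> = 6 * card U + 6 * card (U \<inter> S)"
    by (simp add: sum.distrib sum.If_cases fU)
  also have "\<dots> \<le> 6 * card U + 6 * card S"
    using assms(3) by (simp add: card_mono)
  finally show ?thesis by (simp add: U_def)
qed

lemma sum_if_const: "finite J \<Longrightarrow> (\<Sum>i\<in>J. if P i then k else 0) = of_nat (card {i\<in>J. P i}) * (k::'x::comm_semiring_1)"
  by (simp add: sum.inter_filter[symmetric])

lemma sum_three:
  fixes F :: "real \<Rightarrow> 'x::comm_semiring_1"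
  assumes "finite J" "\<forall>i\<in>J. g i \<in> {a, b, c}" "a \<noteq> b" "a \<noteq> c" "b \<noteq> c"
  shows "(\<Sum>i\<in>J. F (g i)) = of_nat (card {i\<in>J. g i = a}) * F a + of_nat (card {i\<in>J. g i = b}) * F b
     + of_nat (card {i\<in>J. g i = c}) * F c"
proof -
  have "(\<Sum>i\<in>J. F (g i)) = (\<Sum>i\<in>J. (if g i = a then F a else 0) + (if g i = b then F b else 0) + (if g i = c then F c else 0))"
    using assms by (intro sum.cong) auto
  also have "\<dots> = of_nat (card {i\<in>J. g i = a}) * F a + of_nat (card {i\<in>J. g i = b}) * F b
     + of_nat (card {i\<in>J. g i = c}) * F c" by (simp add: sum.distrib sum_if_const assms(1))
  finally show ?thesis .
qed



definition va :: real where "va = 153/300"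
definition vb :: real where "vb = 103/300"
definition vc :: real where "vc = 44/300"

lemma opt_lower:
  assumes "\<forall>i<m. I!i = va" "m \<le> length I" "\<forall>x\<in>set I. 0 \<le> x"
    "\<forall>i<length I. f i < k" "\<forall>j. (\<Sum>i | i < length I \<and> f i = j. I ! i) \<le> 1"
  shows "m \<le> k"
proof -
  have "inj_on f {..<m}"
  proof (rule inj_onI, rule ccontr)
    fix i i' assume ii: "i \<in> {..<m}" "i' \<in> {..<m}" "f i = f i'" "i \<noteq> i'"
    let ?J = "{t. t < length I \<and> f t = f i}"
    have "I!i + I!i' = (\<Sum>t\<in>{i, i'}. I!t)" using ii by simp
    also have "\<dots> \<le> (\<Sum>t\<in>?J. I!t)"
      by (rule sum_mono2) (use ii assms in \<open>auto simp: nth_mem\<close>)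
    also have "\<dots> \<le> 1" using assms(5) by blast
    moreover have "I!i = va" "I!i' = va" using ii assms(1) by auto
    ultimately show False by (simp add: va_def)
  qed
  moreover have "f ` {..<m} \<subseteq> {..<k}" using assms by auto
  ultimately show ?thesis using card_inj_on_le[of f "{..<m}" "{..<k}"] by simp
qed

definition I1 :: "nat \<Rightarrow> real list" where
  "I1 m = replicate m va @ replicate m vb @ replicate m vc"
definition I2 :: "nat \<Rightarrow> real list" where
  "I2 m = replicate m va @ replicate (3*m) vc"

lemma sorted_wrt_rep[simp]: "sorted_wrt (\<lambda>x y. y \<le> x) (replicate n (a::real))"
  by (induction n) auto

lemma I1_props: "sorted_input (I1 m) \<and> valid_items (I1 m)"
  by (auto simp: I1_def sorted_input_def valid_items_def sorted_wrt_append va_def vb_def vc_def)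
lemma I2_props: "sorted_input (I2 m) \<and> valid_items (I2 m)"
  by (auto simp: I2_def sorted_input_def valid_items_def sorted_wrt_append va_def vb_def vc_def)

lemma opt_I1:
  assumes "m > 0" shows "opt (I1 m) = m"
  unfolding opt_def
proof (rule Least_equality)
  define f where "f i = (if i < m then i else if i < 2*m then i - m else i - 2*m)" for i
  have len: "length (I1 m) = 3*m" by (simp add: I1_def)
  have "(\<Sum>i | i < length (I1 m) \<and> f i = j. I1 m ! i) \<le> 1" for j
  proof (cases "j < m")
    case True
    have "{i. i < length (I1 m) \<and> f i = j} = {j, j+m, j+2*m}"
      using True by (auto simp: len f_def)
    moreover have "I1 m ! j = va" "I1 m ! (j+m) = vb" "I1 m ! (j+2*m) = vc"
      using True by (auto simp: I1_def nth_append)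
    ultimately show ?thesis using True assms by (simp add: va_def vb_def vc_def)
  next
    case False
    have "{i. i < length (I1 m) \<and> f i = j} = {}"
      using False by (auto simp: len f_def)
    then show ?thesis by (simp only: sum.empty)
  qed
  moreover have "\<forall>i<length (I1 m). f i < m" by (auto simp: len f_def)
  ultimately show "\<exists>f. (\<forall>i<length (I1 m). f i < m) \<and> (\<forall>j. (\<Sum>i | i < length (I1 m) \<and> f i = j. I1 m ! i) \<le> 1)"
    by blast
next
  fix k :: nat assume "\<exists>f. (\<forall>i<length (I1 m). f i < k) \<and> (\<forall>j. (\<Sum>i | i < length (I1 m) \<and> f i = j. I1 m ! i) \<le> 1)"
  then obtain f where "\<forall>i<length (I1 m). f i < k" "\<forall>j. (\<Sum>i | i < length (I1 m) \<and> f i = j. I1 m ! i) \<le> 1" by blast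
  then show "m \<le> k"
    by (intro opt_lower[of m "I1 m" f k]) (auto simp: I1_def nth_append va_def vb_def vc_def)
qed

lemma opt_I2:
  assumes "m > 0" shows "opt (I2 m) = m"
  unfolding opt_def
proof (rule Least_equality)
  define f where "f i = (if i < m then i else (i - m) div 3)" for i
  have len: "length (I2 m) = 4*m" by (simp add: I2_def)
  have "(\<Sum>i | i < length (I2 m) \<and> f i = j. I2 m ! i) \<le> 1" for j
  proof (cases "j < m")
    case True
    have "{i. i < length (I2 m) \<and> f i = j} = {j, m+3*j, m+3*j+1, m+3*j+2}"
      using True by (auto simp: len f_def; presburger)
    moreover have "I2 m ! j = va" "I2 m ! (m+3*j) = vc" "I2 m ! (m+3*j+1) = vc" "I2 m ! (m+3*j+2) = vc"
      using True by (auto simp: I2_def nth_append)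
    ultimately show ?thesis using True assms by (simp add: va_def vb_def vc_def)
  next
    case False
    have "{i. i < length (I2 m) \<and> f i = j} = {}"
      using False by (auto simp: len f_def)
    then show ?thesis by (simp only: sum.empty)
  qed
  moreover have "\<forall>i<length (I2 m). f i < m" by (auto simp: len f_def)
  ultimately show "\<exists>f. (\<forall>i<length (I2 m). f i < m) \<and> (\<forall>j. (\<Sum>i | i < length (I2 m) \<and> f i = j. I2 m ! i) \<le> 1)"
    by blast
next
  fix k :: nat assume "\<exists>f. (\<forall>i<length (I2 m). f i < k) \<and> (\<forall>j. (\<Sum>i | i < length (I2 m) \<and> f i = j. I2 m ! i) \<le> 1)"
  then obtain f where "\<forall>i<length (I2 m). f i < k" "\<forall>j. (\<Sum>i | i < length (I2 m) \<and> f i = j. I2 m ! i) \<le> 1" by blast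
  then show "m \<le> k"
    by (intro opt_lower[of m "I2 m" f k]) (auto simp: I2_def nth_append va_def vb_def vc_def)
qed



definition binset :: "history \<Rightarrow> nat \<Rightarrow> nat set" where
  "binset H b = {i. i < length H \<and> step_bin (H!i) = b}"

lemma binset_fin[simp]: "finite (binset H b)" by (simp add: binset_def)

lemma weight_sum:
  fixes F :: "real \<Rightarrow> 'x::comm_semiring_1"
  assumes "\<forall>s\<in>set H. step_item s \<in> {va, vb, vc}"
  shows "(\<Sum>i\<in>binset H b. F (step_item (H!i))) =
    of_nat (card {i\<in>binset H b. step_item (H!i) = va}) * F va +
    of_nat (card {i\<in>binset H b. step_item (H!i) = vb}) * F vb +
    of_nat (card {i\<in>binset H b. step_item (H!i) = vc}) * F vc"
  by (rule sum_three) (use assms in \<open>auto simp: binset_def va_def vb_def vc_def\<close>)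

lemma bin_counts:
  assumes "legal_run B H" "\<forall>s\<in>set H. step_item s \<in> {va, vb, vc}"
  shows "153 * card {i\<in>binset H b. step_item (H!i) = va} +
    103 * card {i\<in>binset H b. step_item (H!i) = vb} +
    44 * card {i\<in>binset H b. step_item (H!i) = vc} \<le> (300::nat)"
proof -
  have "bin_load H b \<le> 1" using load_le1[OF assms(1)] .
  moreover have "bin_load H b = (\<Sum>i\<in>binset H b. id (step_item (H!i)))"
    by (simp add: bin_load_idx binset_def)
  ultimately have "real (card {i\<in>binset H b. step_item (H!i) = va}) * va +
    real (card {i\<in>binset H b. step_item (H!i) = vb}) * vb +
    real (card {i\<in>binset H b. step_item (H!i) = vc}) * vc \<le> 1"
    using weight_sum[OF assms(2), of id b] by simp
  then have "real (153 * card {i\<in>binset H b. step_item (H!i) = va} +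
    103 * card {i\<in>binset H b. step_item (H!i) = vb} +
    44 * card {i\<in>binset H b. step_item (H!i) = vc}) \<le> real 300"
    by (simp add: va_def vb_def vc_def)
  then show ?thesis by linarith
qed

lemma pure_split:
  assumes "legal_run B H" "p \<le> length H" "b \<notin> open_bins (take p H)"
  shows "(\<forall>i\<in>binset H b. i < p) \<or> (\<forall>i\<in>binset H b. p \<le> i)"
proof (rule ccontr)
  assume "\<not> ?thesis"
  then obtain i j where "i \<in> binset H b" "j \<in> binset H b" "\<not> i < p" "\<not> p \<le> j"
    by blast
  then show False using purity[OF assms(1) assms(3), of j i] by (auto simp: binset_def)
qed

lemma items_of_run:
  assumes "run A h xs = h @ q" "mset (map step_item q) = mset xs" "s \<in> set q"
  shows "step_item s \<in> set xs"
proof -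
  have "step_item s \<in> set (map step_item q)" using assms(3) by simp
  then show ?thesis by (metis assms(2) set_mset_mset)
qed



lemma final_real:
  assumes "7 * m \<le> 6 * alg + 6 * (B::nat)"
  shows "real alg \<ge> 7 / 6 * real m - real B"
proof -
  have "real (7 * m) \<le> real (6 * alg + 6 * B)" using assms by linarith
  then show ?thesis by simp
qed

lemma ar0: "153*a + 103*b + 44*c \<le> (300::nat) \<Longrightarrow> (a = 0 \<or> a = 1) \<and> c \<le> 6 \<and> b \<le> 2 \<and> (a = 1 \<longrightarrow> c \<le> 3) \<and> (a = 1 \<longrightarrow> b \<le> 1)"
proof -
  assume h: "153*a + 103*b + 44*c \<le> (300::nat)"
  have a: "a \<le> 1" proof (rule ccontr) assume "\<not> a \<le> 1" then have "a \<ge> 2" by simp then show False using h by linarith qed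
  have c: "c \<le> 6" proof (rule ccontr) assume "\<not> c \<le> 6" then have "c \<ge> 7" by simp then show False using h by linarith qed
  have b: "b \<le> 2" proof (rule ccontr) assume "\<not> b \<le> 2" then have "b \<ge> 3" by simp then show False using h by linarith qed
  have c1: "a = 1 \<longrightarrow> c \<le> 3" proof (rule ccontr) assume "\<not> (a = 1 \<longrightarrow> c \<le> 3)" then have "a = 1" "c \<ge> 4" by auto then show False using h by linarith qed
  have b1: "a = 1 \<longrightarrow> b \<le> 1" proof (rule ccontr) assume "\<not> (a = 1 \<longrightarrow> b \<le> 1)" then have "a = 1" "b \<ge> 2" by auto then show False using h by linarith qed
  show ?thesis using a b c c1 b1 by auto
qed
lemma ar1: fixes a b c :: nat assumes h: "153*a + 103*b + 44*c \<le> 300" and z: "b = 0" shows "a*3 + b*3 + c \<le> 6"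
proof -
  have "a = 0 \<or> a = 1" using ar0[OF h] by auto
  then show ?thesis using ar0[OF h] z by auto
qed
lemma ar2: fixes a b c :: nat assumes h: "153*a + 103*b + 44*c \<le> 300" and z: "c = 0" shows "a*3 + b*3 + c \<le> 6"
proof -
  have "a = 0 \<or> a = 1" using ar0[OF h] by auto
  then show ?thesis using ar0[OF h] z by auto
qed

theorem theorem3:
  fixes B m :: nat and A :: maxmin_alg
  assumes "B > 0" and "maxmin_bounded B A"
    and "m > 0" and "m \<ge> 2 * B" and "3 dvd m"
  shows "\<exists>I. sorted_input I \<and> valid_items I \<and> opt I = m \<and>
           real (ALG A I) \<ge> 7 / 6 * real (opt I) - real B"
proof -
  define NH where "NH = nh A va vc"
  define NT where "NT = nt A va vc"
  define tau where "tau = (LEAST k. m \<le> NH k \<or> m \<le> NT k)"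
  have ex: "m \<le> NH (2*m) \<or> m \<le> NT (2*m)" using nh_nt[of A va vc "2*m"] unfolding NH_def NT_def by linarith
  have tau_le: "tau \<le> 2*m" unfolding tau_def by (rule Least_le) (rule ex)
  have tau_P: "m \<le> NH tau \<or> m \<le> NT tau" unfolding tau_def by (rule LeastI) (rule ex)
  have before: "\<forall>k'<tau. NH k' < m \<and> NT k' < m"
    using not_less_Least[of _ "\<lambda>k. m \<le> NH k \<or> m \<le> NT k"] unfolding tau_def[symmetric] by force
  have tau_pos: "0 < tau"
  proof (rule ccontr)
    assume "\<not> 0 < tau"
    then have "tau = 0" by simp
    then show False using tau_P assms(3) by (simp add: NH_def NT_def nh_def nt_def)
  qed
  then obtain p where p: "tau = Suc p" by (metis gr0_implies_Suc)
  have bnd: "NH tau \<le> m" "NT tau \<le> m"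
    using before[rule_format, of p] p by (auto simp: NH_def NT_def nh_Suc nt_Suc)
  have sumt: "NH tau + NT tau = tau" unfolding NH_def NT_def by (rule nh_nt)
  define hh where "hh = histo A va vc tau"
  have hh_len: "length hh = tau" by (simp add: hh_def)
  have hh_items: "\<forall>s\<in>set hh. step_item s \<in> {va, vc}" using histo_items hh_def by blast
  have hh_cnt: "length (filter (\<lambda>s. step_item s = va) hh) = NH tau"
    unfolding hh_def NH_def by (rule histo_count) (simp add: va_def vc_def)
  have dist: "va \<noteq> vb" "va \<noteq> vc" "vb \<noteq> vc" by (auto simp: va_def vb_def vc_def)
  show ?thesis
  proof (cases "m \<le> NH tau")
    case True
    then have nhm: "NH tau = m" using bnd by simp
    define H where "H = run A [] (I2 m)"
    have agr: "run A [] (replicate m va @ [] @ replicate (3*m) vc) =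
      run A hh (replicate (m - NH tau) va @ [] @ replicate (3*m - NT tau) vc)"
      unfolding hh_def NH_def NT_def by (rule agree) (use before in \<open>auto simp: NH_def NT_def\<close>)
    have Hr: "H = run A hh (replicate (3*m - NT tau) vc)"
      using agr nhm by (simp add: H_def I2_def)
    obtain q where q: "H = hh @ q" "mset (map step_item q) = mset (replicate (3*m - NT tau) vc)"
      using run_ext[of A hh "replicate (3*m - NT tau) vc"] Hr by auto
    obtain q0 where q0: "run A [] (I2 m) = [] @ q0" "mset (map step_item q0) = mset (I2 m)"
      using run_ext[of A "[]" "I2 m"] by auto
    have Hq0: "H = q0" using q0 H_def by simp
    have len: "length H = 4*m"
    proof -
      have "length (map step_item q0) = length (I2 m)" using q0(2) by (metis size_mset)
      then show ?thesis using Hq0 by (simp add: I2_def)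
    qed
    have H_items: "\<forall>s\<in>set H. step_item s \<in> {va, vb, vc}"
      using items_of_run[OF q0] Hq0 by (auto simp: I2_def)
    have q_items: "\<forall>s\<in>set q. step_item s = vc"
      using items_of_run[OF Hr[unfolded q(1), symmetric] q(2)] by auto
    have legal: "legal_run B H" using assms(2) I2_props unfolding maxmin_bounded_def H_def by blast
    have taulen: "tau \<le> length H" using tau_le len by simp
    have pre: "H!i = hh!i" if "i < tau" for i using that q(1) hh_len by (simp add: nth_append)
    have post: "step_item (H!i) = vc" if "tau \<le> i" "i < length H" for i
    proof -
      have "H!i = q!(i - tau)" using that q(1) hh_len by (simp add: nth_append)
      moreover have "i - tau < length q" using that q(1) hh_len by simp
      ultimately show ?thesis using q_items by (simp add: nth_mem)
    qed
    define wt where "wt i = (if i < tau then (if step_item (H!i) = va then 6 else 0) else (1::nat))" for i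
    define S where "S = open_bins (take tau H)"
    have cS: "card S \<le> B" unfolding S_def using open_card[OF legal tau_pos taulen] .
    have fS: "finite S" unfolding S_def by (rule open_fin)
    have cb: "(\<Sum>i<length H. wt i) \<le> 6 * card (used_bins H) + 6 * card S"
    proof (rule count_bins[OF _ _ fS])
      fix b
      let ?J = "binset H b"
      let ?G = "\<lambda>v::real. if v = va then (6::nat) else 1"
      have "(\<Sum>i\<in>?J. wt i) \<le> (\<Sum>i\<in>?J. ?G (step_item (H!i)))"
      proof (rule sum_mono)
        fix i assume "i \<in> ?J"
        then have "i < length H" by (simp add: binset_def)
        then show "wt i \<le> ?G (step_item (H!i))" using post[of i] dist by (auto simp: wt_def)
      qed
      also have "\<dots> \<le> 12"
        using weight_sum[OF H_items, of ?G b] bin_counts[OF legal H_items, of b] dist by simp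
      finally show "(\<Sum>i\<in>{i. i < length H \<and> step_bin (H!i) = b}. wt i) \<le> 12"
        by (simp add: binset_def)
    next
      fix b assume bS: "b \<notin> S"
      let ?J = "binset H b"
      have "(\<Sum>i\<in>?J. wt i) \<le> 6"
      proof (cases "\<forall>i\<in>?J. i < tau")
        case True
        let ?G = "\<lambda>v::real. if v = va then (6::nat) else 0"
        have "(\<Sum>i\<in>?J. wt i) = (\<Sum>i\<in>?J. ?G (step_item (H!i)))"
          using True by (intro sum.cong) (auto simp: wt_def)
        also have "\<dots> \<le> 6"
          using weight_sum[OF H_items, of ?G b] bin_counts[OF legal H_items, of b] dist by simp
        finally show ?thesis .
      next
        case False
        then have post': "\<forall>i\<in>?J. tau \<le> i" using pure_split[OF legal taulen bS[unfolded S_def]] by blast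
        let ?G = "\<lambda>v::real. (1::nat)"
        have "(\<Sum>i\<in>?J. wt i) = (\<Sum>i\<in>?J. ?G (step_item (H!i)))"
          using post' by (intro sum.cong) (auto simp: wt_def)
        moreover have "{i\<in>?J. step_item (H!i) = va} = {}" "{i\<in>?J. step_item (H!i) = vb} = {}"
          using post' post dist by (auto simp: binset_def)
        ultimately show ?thesis
          using weight_sum[OF H_items, of ?G b] bin_counts[OF legal H_items, of b] dist by simp
      qed
      then show "(\<Sum>i\<in>{i. i < length H \<and> step_bin (H!i) = b}. wt i) \<le> 6"
        by (simp add: binset_def)
    qed
    have tot: "8 * m \<le> (\<Sum>i<length H. wt i)"
    proof -
      define d where "d = length H - tau"
      have ld: "length H = tau + d" using taulen d_def by simp
      have s1: "(\<Sum>i<tau. wt i) = (\<Sum>i<tau. if step_item (hh!i) = va then 6 else 0)"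
        by (rule sum.cong) (auto simp: wt_def pre)
      also have "\<dots> = of_nat (card {i\<in>{..<tau}. step_item (hh!i) = va}) * 6"
        by (rule sum_if_const) simp
      also have "card {i\<in>{..<tau}. step_item (hh!i) = va} = length (filter (\<lambda>s. step_item s = va) hh)"
        by (simp add: length_filter_conv_card hh_len)
      finally have s1': "(\<Sum>i<tau. wt i) = 6 * m" using hh_cnt nhm by simp
      have s2: "(\<Sum>i=tau..<tau+d. wt i) = d"
        by (simp add: wt_def)
      have "(\<Sum>i<length H. wt i) = (\<Sum>i<tau. wt i) + (\<Sum>i=tau..<tau+d. wt i)"
        unfolding ld using sum.atLeastLessThan_concat[of 0 tau "tau+d" wt] by (simp add: atLeast0LessThan)
      then show ?thesis using s1' s2 d_def len tau_le by simp
    qed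
    have "7 * m \<le> 6 * ALG A (I2 m) + 6 * B"
      using cb tot cS unfolding ALG_def H_def[symmetric] by linarith
    then show ?thesis using I2_props opt_I2[OF assms(3)] final_real by metis
  next
    case False
    then have ntm: "NT tau = m" using bnd tau_P by simp
    define H where "H = run A [] (I1 m)"
    have agr: "run A [] (replicate m va @ replicate m vb @ replicate m vc) =
      run A hh (replicate (m - NH tau) va @ replicate m vb @ replicate (m - NT tau) vc)"
      unfolding hh_def NH_def NT_def by (rule agree) (use before in \<open>auto simp: NH_def NT_def\<close>)
    have Hr: "H = run A hh (replicate (m - NH tau) va @ replicate m vb)"
      using agr ntm by (simp add: H_def I1_def)
    obtain q where q: "H = hh @ q" "mset (map step_item q) = mset (replicate (m - NH tau) va @ replicate m vb)"
      using run_ext[of A hh "replicate (m - NH tau) va @ replicate m vb"] Hr by auto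
    obtain q0 where q0: "run A [] (I1 m) = [] @ q0" "mset (map step_item q0) = mset (I1 m)"
      using run_ext[of A "[]" "I1 m"] by auto
    have Hq0: "H = q0" using q0 H_def by simp
    have H_items: "\<forall>s\<in>set H. step_item s \<in> {va, vb, vc}"
      using items_of_run[OF q0] Hq0 by (auto simp: I1_def)
    have q_items: "\<forall>s\<in>set q. step_item s \<in> {va, vb}"
      using items_of_run[OF Hr[unfolded q(1), symmetric] q(2)] by auto
    have legal: "legal_run B H" using assms(2) I1_props unfolding maxmin_bounded_def H_def by blast
    have taulen: "tau \<le> length H" using q(1) hh_len by simp
    have pre: "step_item (H!i) \<in> {va, vc}" if "i < tau" for i
      using that q(1) hh_len hh_items by (simp add: nth_append nth_mem)
    have post: "step_item (H!i) \<in> {va, vb}" if "tau \<le> i" "i < length H" for i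
    proof -
      have "H!i = q!(i - tau)" using that q(1) hh_len by (simp add: nth_append)
      moreover have "i - tau < length q" using that q(1) hh_len by simp
      ultimately show ?thesis using q_items by (simp add: nth_mem)
    qed
    define F where "F v = (if v = vc then 1 else (3::nat))" for v :: real
    define wt where "wt i = F (step_item (H!i))" for i
    define S where "S = open_bins (take tau H)"
    have cS: "card S \<le> B" unfolding S_def using open_card[OF legal tau_pos taulen] .
    have fS: "finite S" unfolding S_def by (rule open_fin)
    have cb: "(\<Sum>i<length H. wt i) \<le> 6 * card (used_bins H) + 6 * card S"
    proof (rule count_bins[OF _ _ fS])
      fix b
      have "(\<Sum>i\<in>binset H b. wt i) \<le> 12"
        using weight_sum[OF H_items, of F b] bin_counts[OF legal H_items, of b] dist
        by (simp add: wt_def F_def)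
      then show "(\<Sum>i\<in>{i. i < length H \<and> step_bin (H!i) = b}. wt i) \<le> 12"
        by (simp add: binset_def)
    next
      fix b assume bS: "b \<notin> S"
      let ?J = "binset H b"
      have "(\<Sum>i\<in>?J. wt i) \<le> 6"
      proof (cases "\<forall>i\<in>?J. i < tau")
        case True
        have "{i\<in>?J. step_item (H!i) = vb} = {}"
        proof -
          have "step_item (H!i) \<noteq> vb" if "i \<in> ?J" for i
            using True that pre[of i] dist by auto
          then show ?thesis by blast
        qed
        then have "card {i\<in>?J. step_item (H!i) = vb} = 0" by (simp only: card.empty)
        then show ?thesis
          using weight_sum[OF H_items, of F b] ar1[OF bin_counts[OF legal H_items, of b]] dist
          by (simp add: wt_def F_def)
      next
        case False
        then have post': "\<forall>i\<in>?J. tau \<le> i" using pure_split[OF legal taulen bS[unfolded S_def]] by blast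
        have "{i\<in>?J. step_item (H!i) = vc} = {}"
        proof -
          have "step_item (H!i) \<noteq> vc" if "i \<in> ?J" for i
            using post' that post[of i] dist by (auto simp: binset_def)
          then show ?thesis by blast
        qed
        then have "card {i\<in>?J. step_item (H!i) = vc} = 0" by (simp only: card.empty)
        then show ?thesis
          using weight_sum[OF H_items, of F b] ar2[OF bin_counts[OF legal H_items, of b]] dist
          by (simp add: wt_def F_def)
      qed
      then show "(\<Sum>i\<in>{i. i < length H \<and> step_bin (H!i) = b}. wt i) \<le> 6"
        by (simp add: binset_def)
    qed
    have cnt: "card {i\<in>{..<length H}. step_item (H!i) = v} = count (mset (I1 m)) v" for v
    proof -
      have "card {i\<in>{..<length H}. step_item (H!i) = v} = length (filter (\<lambda>s. step_item s = v) H)"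
        by (simp add: length_filter_conv_card)
      also have "\<dots> = count (mset (map step_item H)) v"
        by (induction H) auto
      finally show ?thesis using q0 Hq0 by simp
    qed
    have tot: "7 * m = (\<Sum>i<length H. wt i)"
    proof -
      have "(\<Sum>i<length H. wt i) = (\<Sum>i\<in>{..<length H}. F (step_item (H!i)))" by (simp add: wt_def)
      also have "\<dots> = card {i\<in>{..<length H}. step_item (H!i) = va} * F va +
          card {i\<in>{..<length H}. step_item (H!i) = vb} * F vb +
          card {i\<in>{..<length H}. step_item (H!i) = vc} * F vc"
        using sum_three[of "{..<length H}" "\<lambda>i. step_item (H!i)" va vb vc F] H_items dist
        by (simp add: nth_mem)
      also have "\<dots> = 7 * m" unfolding cnt using dist
        by (simp add: I1_def F_def)
      finally show ?thesis by simp
    qed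
    have "7 * m \<le> 6 * ALG A (I1 m) + 6 * B"
      using cb tot cS unfolding ALG_def H_def[symmetric] by linarith
    then show ?thesis using I1_props opt_I1[OF assms(3)] final_real by metis
  qed
qed


end
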